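(* Let $K\ge 1$, $m\ge 1$, and let $\mathcal L_1,\dots,\mathcal L_K:\mathbb R^m\to[0,\infty)$ be differentiable functions such that each $\mathcal L_k$ is $\nu_k$-smooth. Write $\boldsymbol{\mathcal L}(\vartheta)=(\mathcal L_1(\vartheta),\dots,\mathcal L_K(\vartheta))$. For every $\boldsymbol\lambda\in\Delta^K$ let $\vartheta_{\boldsymbol\lambda}\in\mathbb R^m$ be a minimizer of a fixed scalarization $s_{\boldsymbol\lambda}\circ\boldsymbol{\mathcal L}$ (in item 1, of the linear scalarization $\sum_k\lambda_k\mathcal L_k$), and let $\widehat\vartheta_{\boldsymbol\lambda}\in\mathbb R^m$ be arbitrary. Put $G_k:=\sup_{\boldsymbol\lambda\in\Delta^K}\|\nabla\mathcal L_k(\vartheta_{\boldsymbol\lambda})\|_2$, and for $G,\nu\ge 0$ $$\varepsilon(G,\nu,\boldsymbol\lambda):=G\|\widehat\vartheta_{\boldsymbol\lambda}-\vartheta_{\boldsymbol\lambda}\|_2+\tfrac{\nu}{2}\|\widehat\vartheta_{\boldsymbol\lambda}-\vartheta_{\boldsymbol\lambda}\|_2^2,\qquad \varepsilon_{\max}:=\max_{k\in[K],\,\boldsymbol\lambda\in\Delta^K}\varepsilon(G_k,\nu_k,\boldsymbol\lambda).$$ Then: 1. For linear scalarization, $\sum_k\lambda_k\mathcal L_k(\widehat\vartheta_{\boldsymbol\lambda})-\min_{\vartheta}\sum_k\lambda_k\mathcal L_k(\vartheta)\le \varepsilon\big(0,\sum_k\lambda_k\nu_k,\boldsymbol\lambda\big)$.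 2. For all $k$ and $\boldsymbol\lambda$, $\mathcal L_k(\widehat\vartheta_{\boldsymbol\lambda})-\mathcal L_k(\vartheta_{\boldsymbol\lambda})\le\varepsilon(G_k,\nu_k,\boldsymbol\lambda)$. 3. Let $\mathrm{PF}=\{\boldsymbol{\mathcal L}(\vartheta_{\boldsymbol\lambda}):\boldsymbol\lambda\in\Delta^K\}$ and $\widehat{\mathrm{PF}}=\{\boldsymbol{\mathcal L}(\widehat\vartheta_{\boldsymbol\lambda}):\boldsymbol\lambda\in\Delta^K\}$, and let $r\ge 2\sup_{\boldsymbol\lambda\in\Delta^K}\|\boldsymbol{\mathcal L}(\vartheta_{\boldsymbol\lambda})\|_\infty$ be such that $\widehat{\mathrm{PF}}\subset[0,r]^K$ and $\varepsilon_{\max}\le r/2$. Then $\mathrm{HV}_r(\widehat{\mathrm{PF}})\ge(1-2\varepsilon_{\max}/r)^K\,\mathrm{HV}_r(\mathrm{PF})$.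
   Context: $\Delta^K=\{\boldsymbol\lambda\in\mathbb R^K:\lambda_k\ge0,\sum_k\lambda_k=1\}$. A scalarization is a function $s_{\boldsymbol\lambda}:\mathbb R^K\to\mathbb R$ indexed by $\boldsymbol\lambda\in\Delta^K$; linear scalarization is $s_{\boldsymbol\lambda}(x)=\sum_k\lambda_kx_k$. A differentiable $f$ is $\nu$-smooth if $\nabla f$ is $\nu$-Lipschitz in $\ell_2$. For $\mathcal S\subset[0,r]^K$ the hypervolume is $\mathrm{HV}_r(\mathcal S)=\mathrm{vol}(\{x\in[0,r]^K:\exists s\in\mathcal S,\ s\preceq x\})$, where $\mathrm{vol}$ is Lebesgue measure on $\mathbb R^K$ and $s\preceq x$ means $s_i\le x_i$ for all $i$. *)

theory Defs
  imports "HOL-Analysis.Analysis"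
begin

definition prob_simplex :: "(real ^ 'k) set" where
  "prob_simplex = {l. (\<forall>k. 0 \<le> l $ k) \<and> (\<Sum>k\<in>UNIV. l $ k) = 1}"

definition Lvec :: "('k \<Rightarrow> 'a \<Rightarrow> real) \<Rightarrow> 'a \<Rightarrow> real ^ 'k" where
  "Lvec L t = (\<chi> k. L k t)"

definition HV :: "real \<Rightarrow> (real ^ 'k) set \<Rightarrow> real" where
  "HV r S = measure lebesgue
     {x :: real ^ 'k. (\<forall>i. 0 \<le> x $ i \<and> x $ i \<le> r) \<and> (\<exists>s\<in>S. \<forall>i. s $ i \<le> x $ i)}"

text \<open>epsilon(G, nu, lambda) with G possibly infinite (extended real; 0 * inf = 0).\<close>
definition eps :: "ereal \<Rightarrow> real \<Rightarrow> 'm::real_normed_vector \<Rightarrow> 'm \<Rightarrow> ereal" where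
  "eps G nu thhat th = G * ereal (norm (thhat - th)) + ereal (nu / 2 * (norm (thhat - th))^2)"

definition Gsup :: "('k \<Rightarrow> 'a \<Rightarrow> 'a::real_normed_vector) \<Rightarrow> (real ^ 'j::finite \<Rightarrow> 'a) \<Rightarrow> 'k \<Rightarrow> ereal" where
  "Gsup gradL th k = (SUP l\<in>prob_simplex. ereal (norm (gradL k (th l))))"

end

theory Submission imports Defs begin
lemma meas_cbox: "(a::real^'k) \<le> b \<Longrightarrow> measure lebesgue (cbox a b) = (\<Prod>i\<in>UNIV. b$i - a$i)"
proof -
  assume "a \<le> b"
  then have "a \<in> cbox a b" by (auto simp: mem_box_cart less_eq_vec_def)
  then have "cbox a b \<noteq> {}" by auto
  then show ?thesis by (simp add: content_cbox_cart)
qed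

lemma small_t:
  fixes r e :: real and n :: nat
  assumes "0 < r" "0 < e"
  shows "\<exists>t. 0 < t \<and> t \<le> r \<and> r^n - (r-t)^n \<le> e"
proof -
  have "((\<lambda>t. (r-t)^n) \<longlongrightarrow> (r-0)^n) (at_right 0)"
    by (intro tendsto_intros)
  then have "\<forall>\<^sub>F t in at_right 0. r^n - e < (r-t)^n"
    using assms by (intro order_tendstoD(1)) auto
  then obtain b where b: "b > 0" "\<And>y. y > 0 \<Longrightarrow> y < b \<Longrightarrow> r^n - e < (r-y)^n"
    by (auto simp: eventually_at_right[of 0 "1::real"])
  define t where "t = min (b/2) r"
  have "0 < t" "t \<le> r" "t < b" using b assms by (auto simp: t_def)
  then show ?thesis using b(2)[of t] by (intro exI[of _ t]) auto
qed

lemma upset_measurable: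
  fixes S :: "(real^'k) set" and r :: real
  shows "{x. (\<forall>i. 0 \<le> x$i \<and> x$i \<le> r) \<and> (\<exists>s\<in>S. \<forall>i. s$i \<le> x$i)} \<in> sets lebesgue"
    (is "?U \<in> _")
proof (cases "r \<le> 0")
  case True
  have "?U \<subseteq> {0}"
  proof
    fix x assume "x \<in> ?U"
    then have h: "\<forall>i. 0 \<le> x$i \<and> x$i \<le> r" by simp
    have "x$i = 0" for i using h[rule_format, of i] True by linarith
    then have "\<forall>i. x$i = 0" by blast
    then show "x \<in> {0}" by (simp add: vec_eq_iff)
  qed
  then have "negligible ?U" by (rule negligible_subset[OF negligible_sing])
  then show ?thesis by (rule negligible_imp_sets)
next
  case False
  then have r: "0 < r" by simp
  define B where "B = cbox (0::real^'k) (\<chi> i. r)"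
  define V where "V = {x::real^'k. \<exists>s\<in>S. \<forall>i. s$i < x$i}"
  have "V = (\<Union>s\<in>S. {x. \<forall>i. s$i < x$i})" by (auto simp: V_def)
  moreover have "open {x::real^'k. \<forall>i. (s::real^'k)$i < x$i}" for s
  proof -
    have "{x::real^'k. \<forall>i. (s::real^'k)$i < x$i} = (\<Inter>i\<in>UNIV. {x. x$i > s$i})" by auto
    then show ?thesis by (simp add: open_INT open_halfspace_component_gt_cart)
  qed
  ultimately have "open V" by auto
  then have Vs: "V \<in> sets lebesgue" by (simp add: borel_open)
  define A where "A = V \<inter> B"
  have A: "A \<in> lmeasurable" unfolding A_def B_def
    by (intro bounded_set_imp_lmeasurable bounded_Int[OF disjI2[OF bounded_cbox]] sets.Int Vs fmeasurableD[OF lmeasurable_cbox])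
  have AU: "A \<subseteq> ?U"
    by (auto simp: A_def B_def V_def mem_box_cart) (blast intro: less_imp_le)
  have "negligible (?U - A)"
    unfolding negligible_outer_le
  proof (intro allI impI)
    fix e :: real assume "e > 0"
    then obtain t where t: "0 < t" "t \<le> r" "r ^ CARD('k) - (r-t) ^ CARD('k) \<le> e"
      using small_t r by blast
    define C where "C = {x \<in> B. x + (\<chi> i. t :: real^'k) \<in> V}"
    define B' where "B' = cbox (\<chi> i. t) (\<chi> i. r + t :: real^'k)"
    define B'' where "B'' = cbox (\<chi> i. t) (\<chi> i. r :: real^'k)"
    have CV: "C = (\<lambda>x. x - (\<chi> i. t)) ` (V \<inter> B')"
    proof (rule set_eqI)
      fix x
      show "x \<in> C \<longleftrightarrow> x \<in> (\<lambda>x. x - (\<chi> i. t)) ` (V \<inter> B')"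
      proof
        assume "x \<in> C"
        then have "x + (\<chi> i. t) \<in> V \<inter> B'"
          by (auto simp: C_def B_def B'_def mem_box_cart)
        then show "x \<in> (\<lambda>x. x - (\<chi> i. t)) ` (V \<inter> B')"
          by (intro image_eqI[of _ _ "x + (\<chi> i. t)"]) auto
      next
        assume "x \<in> (\<lambda>x. x - (\<chi> i. t)) ` (V \<inter> B')"
        then obtain y where "y \<in> V \<inter> B'" "x = y - (\<chi> i. t)" by auto
        then show "x \<in> C"
          by (auto simp: C_def B_def B'_def mem_box_cart) (smt (verit))+
      qed
    qed
    have VB': "V \<inter> B' \<in> lmeasurable" unfolding B'_def
      by (intro bounded_set_imp_lmeasurable bounded_Int[OF disjI2[OF bounded_cbox]] sets.Int Vs fmeasurableD[OF lmeasurable_cbox])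
    have C: "C \<in> lmeasurable" unfolding CV by (rule measurable_translation_subtract[OF VB'])
    have mC: "measure lebesgue C = measure lebesgue (V \<inter> B')"
      unfolding CV by (rule measure_translation_subtract)
    have AC: "A \<subseteq> C"
    proof
      fix x assume "x \<in> A"
      then obtain s where s: "s \<in> S" "\<forall>i. s$i < x$i" "x \<in> B" by (auto simp: A_def V_def)
      have "s$i < (x + (\<chi> i. t))$i" for i using s(2)[rule_format, of i] t(1) by simp
      then have "\<forall>i. s$i < (x + (\<chi> i. t))$i" by blast
      then show "x \<in> C" using s by (auto simp: C_def V_def)
    qed
    have UC: "?U - A \<subseteq> C - A"
    proof
      fix x assume "x \<in> ?U - A"
      then obtain s where s: "s \<in> S" "\<forall>i. s$i \<le> x$i" "x \<in> B" "x \<notin> A" by (auto simp: B_def mem_box_cart)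
      have "s$i < (x + (\<chi> i. t))$i" for i using s(2)[rule_format, of i] t(1) by simp
      then have "\<forall>i. s$i < (x + (\<chi> i. t))$i" by blast
      then show "x \<in> C - A" using s by (auto simp: C_def V_def)
    qed
    have B'': "B'' \<subseteq> B" using t by (auto simp: B''_def B_def mem_box_cart) (meson less_le_trans less_imp_le)
    have B''B': "B'' \<subseteq> B'" using t by (auto simp: B''_def B'_def mem_box_cart) (smt (verit))
    have sub: "V \<inter> B' \<subseteq> A \<union> (B' - B'')" using B'' by (auto simp: A_def)
    have "measure lebesgue (V \<inter> B') \<le> measure lebesgue (A \<union> (B' - B''))"
      by (intro measure_mono_fmeasurable sub fmeasurableD[OF VB'] fmeasurable.Un A fmeasurable.Diff) (simp_all add: B'_def B''_def)
    also have "\<dots> \<le> measure lebesgue A + measure lebesgue (B' - B'')"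
      by (intro measure_Un_le fmeasurableD[OF A] fmeasurableD[OF fmeasurable.Diff]) (simp_all add: B'_def B''_def)
    also have "measure lebesgue (B' - B'') = measure lebesgue B' - measure lebesgue B''"
      using B''B' emeasure_lborel_cbox_finite[of "(\<chi> i. t)::real^'k" "\<chi> i. r+t"]
      by (intro measure_Diff) (simp_all add: B'_def B''_def)
    also have "measure lebesgue B' = r ^ CARD('k)"
      unfolding B'_def using r by (subst meas_cbox) (auto simp: less_eq_vec_def)
    also have "measure lebesgue B'' = (r-t) ^ CARD('k)"
      unfolding B''_def using t by (subst meas_cbox) (auto simp: less_eq_vec_def)
    finally have "measure lebesgue C \<le> measure lebesgue A + e" using mC t by linarith
    moreover have "measure lebesgue (C - A) = measure lebesgue C - measure lebesgue A"
      using AC by (intro measurable_measure_Diff C fmeasurableD[OF A])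
    ultimately have "measure lebesgue (C - A) \<le> e" by linarith
    moreover have "C - A \<in> lmeasurable" by (intro fmeasurable.Diff C A)
    ultimately show "\<exists>T. ?U - A \<subseteq> T \<and> T \<in> lmeasurable \<and> measure lebesgue T \<le> e"
      using UC by blast
  qed
  then have UA: "?U - A \<in> sets lebesgue" by (rule negligible_imp_sets)
  have eq: "?U = A \<union> (?U - A)" using AU by blast
  have "A \<union> (?U - A) \<in> sets lebesgue" by (rule sets.Un[OF fmeasurableD[OF A] UA])
  then show ?thesis by (subst eq)
qed

lemma hv_bound:
  fixes P Ph :: "(real^'k) set" and r e :: real
  assumes r: "0 \<le> r" and e: "0 \<le> e" "2*e \<le> r"
   and P: "\<forall>s\<in>P. \<forall>i. s$i \<le> r/2"
   and cov: "\<forall>s\<in>P. \<exists>t\<in>Ph. \<forall>i. t$i \<le> s$i + e"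
  shows "(1 - 2*e/r)^CARD('k) * HV r P \<le> HV r Ph"
proof -
  define c where "c = 1 - 2*e/r"
  have "2*e/r \<le> 1" using r e by (cases "r = 0") (auto simp: field_simps)
  moreover have "0 \<le> 2*e/r" using r e by simp
  ultimately have c: "0 \<le> c" "c \<le> 1" by (auto simp: c_def)
  have cr: "c * r = r - 2*e" using r e by (cases "r = 0") (auto simp: c_def field_simps)
  define D where "D = {x::real^'k. (\<forall>i. 0 \<le> x$i \<and> x$i \<le> r) \<and> (\<exists>s\<in>P. \<forall>i. s$i \<le> x$i)}"
  define Dh where "Dh = {x::real^'k. (\<forall>i. 0 \<le> x$i \<and> x$i \<le> r) \<and> (\<exists>s\<in>Ph. \<forall>i. s$i \<le> x$i)}"
  have HVP: "HV r P = measure lebesgue D" by (simp add: HV_def D_def)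
  have HVPh: "HV r Ph = measure lebesgue Dh" by (simp add: HV_def Dh_def)
  define \<psi> where "\<psi> = (\<lambda>x::real^'k. c *\<^sub>R x + (\<chi> i. 2*e))"
  have sub: "\<psi> ` D \<subseteq> Dh"
  proof
    fix y assume "y \<in> \<psi> ` D"
    then obtain x where x: "x \<in> D" "y = \<psi> x" by auto
    then obtain s where s: "s \<in> P" "\<forall>i. s$i \<le> x$i" and xb: "\<forall>i. 0 \<le> x$i \<and> x$i \<le> r"
      by (auto simp: D_def)
    obtain t where t: "t \<in> Ph" "\<forall>i. t$i \<le> s$i + e" using cov s by blast
    have yi: "y$i = c * x$i + 2*e" for i by (simp add: x \<psi>_def)
    have "0 \<le> y$i" for i using xb c e by (simp add: yi)
    moreover have "y$i \<le> r" for i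
    proof -
      have "c * x$i \<le> c * r" using xb c by (intro mult_left_mono) auto
      then show ?thesis using cr yi by simp
    qed
    moreover have "t$i \<le> y$i" for i
    proof -
      have "c * s$i \<le> c * x$i" using s c by (intro mult_left_mono) auto
      have "s$i \<le> r/2" using P s(1) by blast
      then have "e * (2 * s$i) \<le> e * r" using e by (intro mult_left_mono) auto
      then have "2*e*(s$i) / r \<le> e" using r e
        by (cases "r = 0") (auto simp: pos_divide_le_eq mult.commute mult.left_commute)
      then have "s$i - e \<le> c * s$i" by (simp add: c_def algebra_simps)
      then show ?thesis using \<open>c * s$i \<le> c * x$i\<close> t(2)[rule_format, of i] yi[of i] by linarith
    qed
    ultimately show "y \<in> Dh" unfolding Dh_def using t(1) by blast
  qed
  have Dh_meas: "Dh \<in> sets lebesgue" unfolding Dh_def by (rule upset_measurable)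
  have "Dh \<subseteq> cbox 0 (\<chi> i. r)" by (auto simp: Dh_def mem_box_cart)
  then have "bounded Dh" using bounded_cbox bounded_subset by blast
  then have Dhl: "Dh \<in> lmeasurable" using Dh_meas by (rule bounded_set_imp_lmeasurable)
  have "emeasure lebesgue (\<psi> ` D) \<le> emeasure lebesgue Dh"
    by (rule emeasure_mono[OF sub Dh_meas])
  then have "measure lebesgue (\<psi> ` D) \<le> measure lebesgue Dh"
    using fmeasurableD2[OF Dhl] by (simp add: measure_def enn2real_mono top.not_eq_extremum)
  moreover have "measure lebesgue (\<psi> ` D) = \<bar>c\<bar> ^ DIM(real^'k) * measure lebesgue D"
    unfolding \<psi>_def by (rule measure_lebesgue_affine)
  ultimately show ?thesis using c by (simp add: HVP HVPh c_def)
qed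

lemma descent:
  fixes f :: "real^'m \<Rightarrow> real"
  assumes gd: "\<And>x. GDERIV f x :> g x" and lip: "lipschitz_on nu UNIV g"
  shows "f y \<le> f x + g x \<bullet> (y - x) + nu/2 * (norm (y-x))^2"
proof -
  define d where "d = y - x"
  define a where "a = g x \<bullet> d"
  define n2 where "n2 = (norm d)^2"
  define h where "h t = f (x + t *\<^sub>R d) - t * a - nu/2 * t^2 * n2" for t
  have nu: "0 \<le> nu" using lip by (simp add: lipschitz_on_def)
  have "h 1 \<le> h 0"
  proof (rule DERIV_nonpos_imp_nonincreasing[of 0 1 h])
    fix t :: real assume t: "0 \<le> t" "t \<le> 1"
    have d1: "((\<lambda>t. x + t *\<^sub>R d) has_derivative (\<lambda>s. s *\<^sub>R d)) (at t)"
      by (auto intro!: derivative_eq_intros)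
    have d2: "(f has_derivative (\<lambda>h. h \<bullet> g (x + t *\<^sub>R d))) (at (x + t *\<^sub>R d))"
      using gd by (simp add: gderiv_def)
    have "((\<lambda>t. f (x + t *\<^sub>R d)) has_derivative (\<lambda>s. (s *\<^sub>R d) \<bullet> g (x + t *\<^sub>R d))) (at t)"
      using has_derivative_compose[OF d1 d2] by simp
    moreover have "(\<lambda>s. (s *\<^sub>R d) \<bullet> g (x + t *\<^sub>R d)) = (*) (d \<bullet> g (x + t *\<^sub>R d))"
      by (auto simp: fun_eq_iff)
    ultimately have fd: "((\<lambda>t. f (x + t *\<^sub>R d)) has_real_derivative (d \<bullet> g (x + t *\<^sub>R d))) (at t)"
      by (simp add: has_field_derivative_def)
    have hd: "(h has_real_derivative (d \<bullet> g (x + t *\<^sub>R d) - a - nu * t * n2)) (at t)"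
    proof -
      have p1: "((\<lambda>t. t * a) has_real_derivative a) (at t)"
        by (auto intro!: derivative_eq_intros)
      have p2: "((\<lambda>t. nu/2 * t^2 * n2) has_real_derivative nu * t * n2) (at t)"
        by (auto intro!: derivative_eq_intros)
      show ?thesis unfolding h_def[abs_def] by (rule DERIV_diff[OF DERIV_diff[OF fd p1] p2])
    qed
    have "(g (x + t *\<^sub>R d) - g x) \<bullet> d \<le> norm (g (x + t *\<^sub>R d) - g x) * norm d"
      by (rule norm_cauchy_schwarz[THEN order_trans]) (simp add: inner_commute)
    also have "norm (g (x + t *\<^sub>R d) - g x) \<le> nu * norm ((x + t *\<^sub>R d) - x)"
      using lip unfolding lipschitz_on_def dist_norm by blast
    then have "norm (g (x + t *\<^sub>R d) - g x) * norm d \<le> nu * norm ((x + t *\<^sub>R d) - x) * norm d"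
      by (intro mult_right_mono) auto
    also have "nu * norm ((x + t *\<^sub>R d) - x) * norm d = nu * t * n2"
      using t by (simp add: n2_def power2_eq_square)
    finally have "d \<bullet> g (x + t *\<^sub>R d) - a - nu * t * n2 \<le> 0"
      by (simp add: a_def inner_diff_right inner_commute)
    with hd show "\<exists>y. (h has_real_derivative y) (at t) \<and> y \<le> 0" by blast
  qed simp
  then show ?thesis by (simp add: h_def d_def a_def n2_def algebra_simps)
qed

theorem proposition1:
  fixes L :: "'k::finite \<Rightarrow> real ^ 'm::finite \<Rightarrow> real"
    and gradL :: "'k \<Rightarrow> real ^ 'm \<Rightarrow> real ^ 'm"
    and nu :: "'k \<Rightarrow> real"
    and s :: "real ^ 'k \<Rightarrow> real ^ 'k \<Rightarrow> real"
    and th thhat :: "real ^ 'k \<Rightarrow> real ^ 'm"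
    and r :: real
  assumes nonneg: "\<And>k t. 0 \<le> L k t"
    and grad: "\<And>k t. GDERIV (L k) t :> gradL k t"
    and smooth: "\<And>k. lipschitz_on (nu k) UNIV (gradL k)"
    and minimizer: "\<And>l t. l \<in> prob_simplex \<Longrightarrow> s l (Lvec L (th l)) \<le> s l (Lvec L t)"
  defines "G \<equiv> Gsup gradL th"
    and "epsmax \<equiv> (SUP p\<in>UNIV \<times> prob_simplex. eps (Gsup gradL th (fst p)) (nu (fst p)) (thhat (snd p)) (th (snd p)))"
  shows
    "((\<forall>l x. s l x = (\<Sum>k\<in>UNIV. l $ k * x $ k)) \<longrightarrow>
        (\<forall>l\<in>prob_simplex.
           ereal ((\<Sum>k\<in>UNIV. l $ k * L k (thhat l)) - (INF t. \<Sum>k\<in>UNIV. l $ k * L k t))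
             \<le> eps 0 (\<Sum>k\<in>UNIV. l $ k * nu k) (thhat l) (th l)))
     \<and> (\<forall>k. \<forall>l\<in>prob_simplex.
           ereal (L k (thhat l) - L k (th l)) \<le> eps (G k) (nu k) (thhat l) (th l))
     \<and> ((\<forall>l\<in>prob_simplex. 2 * infnorm (Lvec L (th l)) \<le> r)
         \<and> (\<forall>l\<in>prob_simplex. \<forall>k. 0 \<le> L k (thhat l) \<and> L k (thhat l) \<le> r)
         \<and> epsmax \<le> ereal (r / 2)
        \<longrightarrow> HV r ((\<lambda>l. Lvec L (thhat l)) ` prob_simplex)
              \<ge> (1 - 2 * real_of_ereal epsmax / r) ^ CARD('k) * HV r ((\<lambda>l. Lvec L (th l)) ` prob_simplex))"
proof -
  define l0 :: "real^'k" where "l0 = (\<chi> i. 1 / real CARD('k))"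
  have l0: "l0 \<in> prob_simplex" by (simp add: l0_def prob_simplex_def)
  have nu0: "0 \<le> nu k" for k using smooth[of k] by (simp add: lipschitz_on_def)
  have desc: "L k y \<le> L k x + gradL k x \<bullet> (y - x) + nu k/2 * (norm (y-x))^2" for k x y
    by (rule descent[OF grad smooth])
  have Gge: "ereal (norm (gradL k (th l))) \<le> G k" if "l \<in> prob_simplex" for k l
    unfolding G_def Gsup_def using that by (rule SUP_upper)
  have P2: "ereal (L k (thhat l) - L k (th l)) \<le> eps (G k) (nu k) (thhat l) (th l)"
    if l: "l \<in> prob_simplex" for k l
  proof -
    define d where "d = thhat l - th l"
    have "L k (thhat l) - L k (th l) \<le> gradL k (th l) \<bullet> d + nu k/2 * (norm d)^2"
      using desc[of k "thhat l" "th l"] by (simp add: d_def)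
    also have "gradL k (th l) \<bullet> d \<le> norm (gradL k (th l)) * norm d"
      by (rule norm_cauchy_schwarz)
    finally have "ereal (L k (thhat l) - L k (th l)) \<le> ereal (norm (gradL k (th l))) * ereal (norm d) + ereal (nu k/2 * (norm d)^2)"
      by simp
    also have "\<dots> \<le> G k * ereal (norm d) + ereal (nu k/2 * (norm d)^2)"
      by (intro add_right_mono ereal_mult_right_mono Gge l) simp
    finally show ?thesis by (simp add: eps_def d_def)
  qed
  have P1: "ereal ((\<Sum>k\<in>UNIV. l $ k * L k (thhat l)) - (INF t. \<Sum>k\<in>UNIV. l $ k * L k t))
             \<le> eps 0 (\<Sum>k\<in>UNIV. l $ k * nu k) (thhat l) (th l)"
    if lin: "\<forall>l x. s l x = (\<Sum>k\<in>UNIV. l $ k * x $ k)" and l: "l \<in> prob_simplex" for l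
  proof -
    define F where "F t = (\<Sum>k\<in>UNIV. l $ k * L k t)" for t
    define gF where "gF t = (\<Sum>k\<in>UNIV. l $ k *\<^sub>R gradL k t)" for t
    define nuF where "nuF = (\<Sum>k\<in>UNIV. l $ k * nu k)"
    have lpos: "0 \<le> l $ k" for k using l by (simp add: prob_simplex_def)
    have gdF: "GDERIV F t :> gF t" for t
    proof -
      have "(F has_derivative (\<lambda>h. \<Sum>k\<in>UNIV. l $ k * (h \<bullet> gradL k t))) (at t)"
        unfolding F_def[abs_def]
        by (intro has_derivative_sum has_derivative_mult_right) (use grad in \<open>simp add: gderiv_def\<close>)
      moreover have "(\<lambda>h. \<Sum>k\<in>UNIV. l $ k * (h \<bullet> gradL k t)) = (\<lambda>h. h \<bullet> gF t)"
        by (auto simp: fun_eq_iff gF_def inner_sum_right)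
      ultimately show ?thesis by (simp add: gderiv_def)
    qed
    have lipF: "lipschitz_on nuF UNIV gF"
    proof (rule lipschitz_onI)
      fix x y :: "real^'m"
      have "dist (gF x) (gF y) = norm (\<Sum>k\<in>UNIV. l $ k *\<^sub>R (gradL k x - gradL k y))"
        by (simp add: gF_def dist_norm sum_subtractf scaleR_diff_right)
      also have "\<dots> \<le> (\<Sum>k\<in>UNIV. norm (l $ k *\<^sub>R (gradL k x - gradL k y)))"
        by (rule norm_sum)
      also have "\<dots> = (\<Sum>k\<in>UNIV. l $ k * dist (gradL k x) (gradL k y))"
        using lpos by (simp add: dist_norm)
      also have "\<dots> \<le> (\<Sum>k\<in>UNIV. l $ k * (nu k * dist x y))"
        by (intro sum_mono mult_left_mono lpos lipschitz_onD[OF smooth]) auto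
      also have "\<dots> = nuF * dist x y"
        by (simp add: nuF_def sum_distrib_right mult.assoc)
      finally show "dist (gF x) (gF y) \<le> nuF * dist x y" .
    next
      show "0 \<le> nuF" unfolding nuF_def using lpos nu0 by (intro sum_nonneg) auto
    qed
    have min: "F (th l) \<le> F t" for t
      using minimizer[OF l, of t] lin by (simp add: F_def Lvec_def)
    have "(\<lambda>h. h \<bullet> gF (th l)) = (\<lambda>v. 0)"
      using gdF[of "th l"] min
      by (intro differential_zero_maxmin[of "th l" UNIV F]) (auto simp: gderiv_def)
    then have "gF (th l) \<bullet> gF (th l) = 0" by metis
    then have g0: "gF (th l) = 0" by simp
    have "F (thhat l) \<le> F (th l) + nuF/2 * (norm (thhat l - th l))^2"
      using descent[OF gdF lipF, of "thhat l" "th l"] g0 by simp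
    moreover have "(INF t. F t) = F (th l)"
    proof (rule antisym)
      show "(INF t. F t) \<le> F (th l)"
        by (rule cINF_lower) (auto intro!: bdd_belowI[of _ "F (th l)"] min)
      show "F (th l) \<le> (INF t. F t)"
        by (rule cINF_greatest) (auto intro: min)
    qed
    ultimately show ?thesis
      by (simp add: eps_def F_def[symmetric] nuF_def[symmetric])
  qed
  have P3: "HV r ((\<lambda>l. Lvec L (thhat l)) ` prob_simplex)
              \<ge> (1 - 2 * real_of_ereal epsmax / r) ^ CARD('k) * HV r ((\<lambda>l. Lvec L (th l)) ` prob_simplex)"
    if H1: "\<forall>l\<in>prob_simplex. 2 * infnorm (Lvec L (th l)) \<le> r"
      and H3: "epsmax \<le> ereal (r / 2)"
  proof -
    have epsle: "eps (G k) (nu k) (thhat l) (th l) \<le> epsmax" if "l \<in> prob_simplex" for k l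
      unfolding epsmax_def G_def using that
      by (intro SUP_upper2[of "(k, l)"]) auto
    obtain k0 :: 'k where True by blast
    have "0 \<le> G k0" using Gge[OF l0, of k0] by (meson ereal_less_eq(5) norm_ge_zero order_trans)
    then have "0 \<le> eps (G k0) (nu k0) (thhat l0) (th l0)"
      unfolding eps_def using nu0[of k0]
      by (intro add_nonneg_nonneg) (auto intro: mult_nonneg_nonneg)
    then have e0: "0 \<le> epsmax" using epsle[OF l0, of k0] by simp
    define e where "e = real_of_ereal epsmax"
    have ee: "epsmax = ereal e" unfolding e_def using e0 H3 by (intro ereal_real'[symmetric]) auto
    have r0: "0 \<le> r" using H1 l0 infnorm_pos_le[of "Lvec L (th l0)"] by force
    have e: "0 \<le> e" "2*e \<le> r" using e0 H3 by (auto simp: ee)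
    have Pb: "\<forall>s\<in>(\<lambda>l. Lvec L (th l)) ` prob_simplex. \<forall>i. s$i \<le> r/2"
    proof (intro ballI allI)
      fix s i assume "s \<in> (\<lambda>l. Lvec L (th l)) ` prob_simplex"
      then obtain l where "l \<in> prob_simplex" "s = Lvec L (th l)" by auto
      then show "s$i \<le> r/2" using H1 component_le_infnorm_cart[of s i] by force
    qed
    have cov: "\<forall>s\<in>(\<lambda>l. Lvec L (th l)) ` prob_simplex. \<exists>t\<in>(\<lambda>l. Lvec L (thhat l)) ` prob_simplex. \<forall>i. t$i \<le> s$i + e"
    proof
      fix s assume "s \<in> (\<lambda>l. Lvec L (th l)) ` prob_simplex"
      then obtain l where l: "l \<in> prob_simplex" "s = Lvec L (th l)" by auto
      have "L i (thhat l) \<le> L i (th l) + e" for i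
        using order_trans[OF P2[OF l(1), of i] epsle[OF l(1), of i]] by (simp add: ee)
      then show "\<exists>t\<in>(\<lambda>l. Lvec L (thhat l)) ` prob_simplex. \<forall>i. t$i \<le> s$i + e"
        using l by (intro bexI[of _ "Lvec L (thhat l)"]) (auto simp: Lvec_def)
    qed
    show ?thesis using hv_bound[OF r0 e Pb cov] by (simp add: e_def)
  qed
  show ?thesis using P1 P2 P3 by blast
qed

end
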